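(* Let $\mu$ be a distribution over $\{0,1\}^V$ and $\theta\in(0,1)$. The Markov chains $P_{\pi\text{-GD}}$, $P_{\mathrm{cl}}$ and $P_{\mathrm{s\text{-}GD}}$ are all reversible with respect to $\pi$.
   Context: Tilted $(\theta*\mu)(\sigma)\propto\mu(\sigma)\theta^{\|\sigma\|_1}$. $\mathsf{lift}:\{0,1\}^V\to\{0,1,\star\}^V$ random: independently per coordinate $0\mapsto0$, $1\mapsto\star$ w.p. $1-\theta$, $1\mapsto1$ w.p. $\theta$; $\mathsf{contr}$: $0\mapsto0$, $1,\star\mapsto1$. $\pi$: law of $\mathsf{lift}(X)$, $X\sim\mu$, support $\Omega(\pi)$. $P_{\pi\text{-GD}}$: pick $v$ uniformly, resample $X_v$ from $\pi$ given $X_{V\setminus\{v\}}$. $P_{\mathrm{cl}}$: $X\mapsto\mathsf{lift}(\mathsf{contr}(X))$. $P_{\mathrm{s\text{-}GD}}$: pick $v$ uniformly; if $X_v=\star$ keep; otherwise resample $X_v\in\{0,1\}$ from $(\theta*\mu)_v^{\sigma_{V\setminus\{v\}}}$, $\sigma=\mathsf{contr}(X)$. Reversible w.r.t. $\pi$: $\pi(\sigma)P(\sigma,\tau)=\pi(\tau)P(\tau,\sigma)$ for all $\sigma,\tau\in\Omega(\pi)$. *)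

theory Defs
  imports Complex_Main
begin

text \<open>Configurations in {0,1}^V are 'v \<Rightarrow> bool
  (True = 1); configurations in {0,1,star}^V are 'v \<Rightarrow> spin.\<close>

datatype spin = Zero | One | Star

lemma UNIV_spin: "(UNIV :: spin set) = {Zero, One, Star}"
  using spin.exhaust by auto

instance spin :: finite
  by standard (simp add: UNIV_spin)

definition is_distribution :: "('a::finite \<Rightarrow> real) \<Rightarrow> bool" where
  "is_distribution p \<longleftrightarrow> (\<forall>x. 0 \<le> p x) \<and> (\<Sum>x\<in>UNIV. p x) = 1"

definition weight :: "('v::finite \<Rightarrow> bool) \<Rightarrow> nat" where
  "weight \<sigma> = card {v. \<sigma> v}"

definition tilt :: "real \<Rightarrow> (('v::finite \<Rightarrow> bool) \<Rightarrow> real) \<Rightarrow> ('v \<Rightarrow> bool) \<Rightarrow> real" where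
  "tilt \<theta> \<mu> \<sigma> = \<mu> \<sigma> * \<theta> ^ weight \<sigma> / (\<Sum>\<tau>\<in>UNIV. \<mu> \<tau> * \<theta> ^ weight \<tau>)"

definition cond_marg :: "(('v \<Rightarrow> 'a::finite) \<Rightarrow> real) \<Rightarrow> 'v \<Rightarrow> ('v \<Rightarrow> 'a) \<Rightarrow> 'a \<Rightarrow> real" where
  "cond_marg \<nu> v x a = \<nu> (x(v := a)) / (\<Sum>c\<in>UNIV. \<nu> (x(v := c)))"

definition contr :: "('v \<Rightarrow> spin) \<Rightarrow> ('v \<Rightarrow> bool)" where
  "contr X = (\<lambda>v. X v \<noteq> Zero)"

definition lift_coord :: "real \<Rightarrow> bool \<Rightarrow> spin \<Rightarrow> real" where
  "lift_coord \<theta> b s = (case (b, s) of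
      (False, Zero) \<Rightarrow> 1
    | (True, Star) \<Rightarrow> 1 - \<theta>
    | (True, One) \<Rightarrow> \<theta>
    | _ \<Rightarrow> 0)"

definition lift_kernel :: "real \<Rightarrow> ('v::finite \<Rightarrow> bool) \<Rightarrow> ('v \<Rightarrow> spin) \<Rightarrow> real" where
  "lift_kernel \<theta> \<sigma> X = (\<Prod>v\<in>UNIV. lift_coord \<theta> (\<sigma> v) (X v))"

definition pi_dist :: "real \<Rightarrow> (('v::finite \<Rightarrow> bool) \<Rightarrow> real) \<Rightarrow> ('v \<Rightarrow> spin) \<Rightarrow> real" where
  "pi_dist \<theta> \<mu> X = (\<Sum>\<sigma>\<in>UNIV. \<mu> \<sigma> * lift_kernel \<theta> \<sigma> X)"

definition support :: "('a \<Rightarrow> real) \<Rightarrow> 'a set" where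
  "support p = {x. p x > 0}"

definition P_piGD :: "real \<Rightarrow> (('v::finite \<Rightarrow> bool) \<Rightarrow> real) \<Rightarrow> ('v \<Rightarrow> spin) \<Rightarrow> ('v \<Rightarrow> spin) \<Rightarrow> real" where
  "P_piGD \<theta> \<mu> X Y = (\<Sum>v\<in>UNIV. (1 / real (card (UNIV :: 'v set))) *
      (if (\<forall>u. u \<noteq> v \<longrightarrow> Y u = X u)
       then cond_marg (pi_dist \<theta> \<mu>) v X (Y v) else 0))"

definition P_cl :: "real \<Rightarrow> ('v::finite \<Rightarrow> spin) \<Rightarrow> ('v \<Rightarrow> spin) \<Rightarrow> real" where
  "P_cl \<theta> X Y = lift_kernel \<theta> (contr X) Y"

definition P_sGD :: "real \<Rightarrow> (('v::finite \<Rightarrow> bool) \<Rightarrow> real) \<Rightarrow> ('v \<Rightarrow> spin) \<Rightarrow> ('v \<Rightarrow> spin) \<Rightarrow> real" where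
  "P_sGD \<theta> \<mu> X Y = (\<Sum>v\<in>UNIV. (1 / real (card (UNIV :: 'v set))) *
      (if X v = Star then (if Y = X then 1 else 0)
       else if (\<forall>u. u \<noteq> v \<longrightarrow> Y u = X u) \<and> Y v \<noteq> Star
       then cond_marg (tilt \<theta> \<mu>) v (contr X) (Y v = One) else 0))"

definition reversible :: "('a \<Rightarrow> real) \<Rightarrow> ('a \<Rightarrow> 'a \<Rightarrow> real) \<Rightarrow> bool" where
  "reversible p P \<longleftrightarrow> (\<forall>\<sigma>\<in>support p. \<forall>\<tau>\<in>support p. p \<sigma> * P \<sigma> \<tau> = p \<tau> * P \<tau> \<sigma>)"

end

theory Submission
  imports Defs
begin

lemma lk_zero:
  assumes "\<sigma> \<noteq> contr X"
  shows "lift_kernel \<theta> \<sigma> X = 0"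
proof -
  from assms obtain v where "\<sigma> v \<noteq> contr X v" by auto
  then have "lift_coord \<theta> (\<sigma> v) (X v) = 0"
    by (cases "X v"; cases "\<sigma> v"; simp add: contr_def lift_coord_def)
  then show ?thesis unfolding lift_kernel_def
    by (meson UNIV_I finite_UNIV prod_zero)
qed

lemma pi_eq: "pi_dist \<theta> \<mu> X = \<mu> (contr X) * lift_kernel \<theta> (contr X) X"
proof -
  have "pi_dist \<theta> \<mu> X = (\<Sum>\<sigma>\<in>UNIV. if \<sigma> = contr X then \<mu> \<sigma> * lift_kernel \<theta> \<sigma> X else 0)"
    unfolding pi_dist_def by (rule sum.cong) (auto simp: lk_zero)
  also have "\<dots> = \<mu> (contr X) * lift_kernel \<theta> (contr X) X"
    by (simp add: sum.delta')
  finally show ?thesis .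
qed

lemma pow_weight: "(\<theta>::real) ^ weight \<sigma> = (\<Prod>u\<in>UNIV. if \<sigma> u then \<theta> else 1)"
  unfolding weight_def
  by (simp add: prod.If_cases Collect_conv_if)

lemma key:
  assumes "\<forall>u. u \<noteq> v \<longrightarrow> X u = Y u" "X v \<noteq> Star" "Y v \<noteq> Star"
  shows "lift_kernel \<theta> (contr X) X * \<theta> ^ weight (contr Y)
       = lift_kernel \<theta> (contr Y) Y * \<theta> ^ weight (contr X)"
proof -
  define h where "h a b = lift_coord \<theta> (a \<noteq> Zero) a * (if b \<noteq> Zero then \<theta> else 1)" for a b
  have L: "lift_kernel \<theta> (contr X) X * \<theta> ^ weight (contr Y) = (\<Prod>u\<in>UNIV. h (X u) (Y u))"
    for X Y :: "'a \<Rightarrow> spin"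
    unfolding lift_kernel_def pow_weight h_def prod.distrib[symmetric] contr_def by simp
  have "h (X u) (Y u) = h (Y u) (X u)" for u
  proof (cases "u = v")
    case True
    then show ?thesis using assms
      by (cases "X v"; cases "Y v"; simp add: h_def lift_coord_def)
  next
    case False
    then show ?thesis using assms by simp
  qed
  then show ?thesis unfolding L by simp
qed

lemma rev1:
  fixes \<mu> :: "('v::finite \<Rightarrow> bool) \<Rightarrow> real" and \<theta> :: real
  shows "reversible (pi_dist \<theta> \<mu>) (P_piGD \<theta> \<mu>)"
    unfolding reversible_def
  proof (intro ballI)
    fix X Y :: "'v \<Rightarrow> spin"
    have "pi_dist \<theta> \<mu> X * ((1 / real (card (UNIV :: 'v set))) *
      (if (\<forall>u. u \<noteq> v \<longrightarrow> Y u = X u) then cond_marg (pi_dist \<theta> \<mu>) v X (Y v) else 0))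
      = pi_dist \<theta> \<mu> Y * ((1 / real (card (UNIV :: 'v set))) *
      (if (\<forall>u. u \<noteq> v \<longrightarrow> X u = Y u) then cond_marg (pi_dist \<theta> \<mu>) v Y (X v) else 0))" for v
    proof (cases "\<forall>u. u \<noteq> v \<longrightarrow> Y u = X u")
      case True
      then have e1: "X(v := Y v) = Y" "Y(v := X v) = X" by auto
      have e2: "X(v := c) = Y(v := c)" for c using True by auto
      show ?thesis using True unfolding cond_marg_def e1 e2 by auto
    next
      case False
      then have "\<not> (\<forall>u. u \<noteq> v \<longrightarrow> X u = Y u)" by metis
      then show ?thesis using False by (simp only: if_False)
    qed
    then show "pi_dist \<theta> \<mu> X * P_piGD \<theta> \<mu> X Y = pi_dist \<theta> \<mu> Y * P_piGD \<theta> \<mu> Y X"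
      unfolding P_piGD_def sum_distrib_left by simp
  qed

lemma rev2:
  fixes \<mu> :: "('v::finite \<Rightarrow> bool) \<Rightarrow> real" and \<theta> :: real
  shows "reversible (pi_dist \<theta> \<mu>) (P_cl \<theta>)"
    unfolding reversible_def P_cl_def pi_eq
  proof (intro ballI)
    fix X Y :: "'v \<Rightarrow> spin"
    show "\<mu> (contr X) * lift_kernel \<theta> (contr X) X * lift_kernel \<theta> (contr X) Y =
          \<mu> (contr Y) * lift_kernel \<theta> (contr Y) Y * lift_kernel \<theta> (contr Y) X"
    proof (cases "contr X = contr Y")
      case True then show ?thesis by simp
    next
      case False then show ?thesis by (simp add: lk_zero)
    qed
  qed

lemma rev3:
  fixes \<mu> :: "('v::finite \<Rightarrow> bool) \<Rightarrow> real" and \<theta> :: real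
  shows "reversible (pi_dist \<theta> \<mu>) (P_sGD \<theta> \<mu>)"
    unfolding reversible_def
  proof (intro ballI)
    fix X Y :: "'v \<Rightarrow> spin"
    let ?c = "1 / real (card (UNIV :: 'v set))"
    have "pi_dist \<theta> \<mu> X * (?c * (if X v = Star then (if Y = X then 1 else 0)
       else if (\<forall>u. u \<noteq> v \<longrightarrow> Y u = X u) \<and> Y v \<noteq> Star
       then cond_marg (tilt \<theta> \<mu>) v (contr X) (Y v = One) else 0))
     = pi_dist \<theta> \<mu> Y * (?c * (if Y v = Star then (if X = Y then 1 else 0)
       else if (\<forall>u. u \<noteq> v \<longrightarrow> X u = Y u) \<and> X v \<noteq> Star
       then cond_marg (tilt \<theta> \<mu>) v (contr Y) (X v = One) else 0))" for v
    proof (cases "X v = Star \<or> Y v = Star")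
      case S: True
      show ?thesis
      proof (cases "Y = X")
        case True
        then show ?thesis by simp
      next
        case N: False
        then have N2: "X \<noteq> Y" by metis
        have a: "(if X v = Star then (if Y = X then 1 else 0)
       else if (\<forall>u. u \<noteq> v \<longrightarrow> Y u = X u) \<and> Y v \<noteq> Star
       then cond_marg (tilt \<theta> \<mu>) v (contr X) (Y v = One) else 0) = (0::real)"
          using S N N2 by auto
        have b: "(if Y v = Star then (if X = Y then 1 else 0)
       else if (\<forall>u. u \<noteq> v \<longrightarrow> X u = Y u) \<and> X v \<noteq> Star
       then cond_marg (tilt \<theta> \<mu>) v (contr Y) (X v = One) else 0) = (0::real)"
          using S N N2 by auto
        show ?thesis unfolding a b by simp
      qed
    next
      case F: False
      show ?thesis
      proof (cases "\<forall>u. u \<noteq> v \<longrightarrow> Y u = X u")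
        case True
        have FX: "X v \<noteq> Star" and FY: "Y v \<noteq> Star" using F by auto
        have T2: "\<forall>u. u \<noteq> v \<longrightarrow> X u = Y u" using True by auto
        have oX: "(X v = One) = (X v \<noteq> Zero)" using FX by (cases "X v") auto
        have oY: "(Y v = One) = (Y v \<noteq> Zero)" using FY by (cases "Y v") auto
        have e1a: "(contr X)(v := (Y v = One)) = contr Y"
        proof (rule ext)
          fix u show "((contr X)(v := (Y v = One))) u = contr Y u"
            using oY T2 by (cases "u = v") (simp_all add: contr_def)
        qed
        have e1b: "(contr Y)(v := (X v = One)) = contr X"
        proof (rule ext)
          fix u show "((contr Y)(v := (X v = One))) u = contr X u"
            using oX T2 by (cases "u = v") (simp_all add: contr_def)
        qed
        note e1 = e1a e1b
        have e2: "(contr X)(v := c) = (contr Y)(v := c)" for c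
        proof (rule ext)
          fix u show "((contr X)(v := c)) u = ((contr Y)(v := c)) u"
            using T2 by (cases "u = v") (simp_all add: contr_def)
        qed
        have k: "lift_kernel \<theta> (contr X) X * \<theta> ^ weight (contr Y)
             = lift_kernel \<theta> (contr Y) Y * \<theta> ^ weight (contr X)"
          by (rule key[OF T2 FX FY])
        define Z where "Z = (\<Sum>c\<in>UNIV. tilt \<theta> \<mu> ((contr Y)(v := c)))"
        have A: "cond_marg (tilt \<theta> \<mu>) v (contr X) (Y v = One) = tilt \<theta> \<mu> (contr Y) / Z"
          unfolding cond_marg_def e1 unfolding e2 Z_def ..
        have B: "cond_marg (tilt \<theta> \<mu>) v (contr Y) (X v = One) = tilt \<theta> \<mu> (contr X) / Z"
          unfolding cond_marg_def e1 Z_def ..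
        define T where "T = (\<Sum>\<tau>\<in>UNIV. \<mu> \<tau> * \<theta> ^ weight \<tau>)"
        have M: "pi_dist \<theta> \<mu> X * tilt \<theta> \<mu> (contr Y) = pi_dist \<theta> \<mu> Y * tilt \<theta> \<mu> (contr X)"
        proof -
          have "pi_dist \<theta> \<mu> X * tilt \<theta> \<mu> (contr Y) = \<mu> (contr X) * \<mu> (contr Y) / T *
              (lift_kernel \<theta> (contr X) X * \<theta> ^ weight (contr Y))"
            unfolding pi_eq tilt_def T_def[symmetric] by (simp add: field_simps)
          also have "\<dots> = \<mu> (contr X) * \<mu> (contr Y) / T *
              (lift_kernel \<theta> (contr Y) Y * \<theta> ^ weight (contr X))"
            by (simp only: k)
          also have "\<dots> = pi_dist \<theta> \<mu> Y * tilt \<theta> \<mu> (contr X)"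
            unfolding pi_eq tilt_def T_def[symmetric] by (simp add: field_simps)
          finally show ?thesis .
        qed
        have "pi_dist \<theta> \<mu> X * (?c * (tilt \<theta> \<mu> (contr Y) / Z)) = pi_dist \<theta> \<mu> Y * (?c * (tilt \<theta> \<mu> (contr X) / Z))"
          using arg_cong[OF M, of "\<lambda>t. ?c * t / Z"] by (simp add: ac_simps)
        moreover have c1: "(\<forall>u. u \<noteq> v \<longrightarrow> Y u = X u) = True" using True by simp
        moreover have c2: "(\<forall>u. u \<noteq> v \<longrightarrow> X u = Y u) = True" using T2 by simp
        ultimately show ?thesis using FX FY by (simp only: A B c1 c2 if_True if_False simp_thms)
      next
        case False
        then have "\<not> (\<forall>u. u \<noteq> v \<longrightarrow> X u = Y u)" by metis
        then have d2: "(\<forall>u. u \<noteq> v \<longrightarrow> X u = Y u) = False" by simp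
        have d1: "(\<forall>u. u \<noteq> v \<longrightarrow> Y u = X u) = False" using False by simp
        have d3: "(X v = Star) = False" "(Y v = Star) = False" using F by simp_all
        show ?thesis by (simp only: d1 d2 d3 if_True if_False simp_thms mult_zero_right)
      qed
    qed
    then show "pi_dist \<theta> \<mu> X * P_sGD \<theta> \<mu> X Y = pi_dist \<theta> \<mu> Y * P_sGD \<theta> \<mu> Y X"
      unfolding P_sGD_def sum_distrib_left by simp
  qed

theorem lemma5p5:
  fixes \<mu> :: "('v::finite \<Rightarrow> bool) \<Rightarrow> real" and \<theta> :: real
  assumes "is_distribution \<mu>" and "0 < \<theta>" and "\<theta> < 1"
  shows "reversible (pi_dist \<theta> \<mu>) (P_piGD \<theta> \<mu>)
    \<and> reversible (pi_dist \<theta> \<mu>) (P_cl \<theta>)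
    \<and> reversible (pi_dist \<theta> \<mu>) (P_sGD \<theta> \<mu>)"
  using rev1 rev2 rev3 by blast

end
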